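(* Let $x_1,x_2\in\mathbb{R}$ and $z_1,z_2,v_2\in\mathbb{C}$, and define $g_{\sigma^2}=4|z_1|^2+x_1^2$, $g_{\rho^2}=4|z_2|^2+|v_2|^2+\tfrac13x_2^2$, $g_{\rho\sigma^2}=\tfrac23x_2(x_1^2-2|z_1|^2)+4z_2\bar z_1^2+4\bar z_2z_1^2+2v_2\bar z_1x_1+2\bar v_2z_1x_1$, $g_{\rho^2\sigma^2}=(8|z_2|^2-|v_2|^2-\tfrac23x_2^2)(x_1^2-2|z_1|^2)-12z_2\bar v_2\bar z_1x_1-12\bar z_2v_2z_1x_1+8z_2x_2\bar z_1^2+8\bar z_2x_2z_1^2-2v_2x_2\bar z_1x_1-2\bar v_2x_2z_1x_1-3v_2^2\bar z_1^2-3\bar v_2^2z_1^2$. Then $g_{\sigma^2},g_{\rho^2}\ge0$, and whenever $g_{\sigma^2}g_{\rho^2}\neq0$, $$-\sqrt2\le\frac{g_{\rho\sigma^2}}{\sqrt{g_{\rho^2}}\,g_{\sigma^2}}\le\sqrt2,\qquad -\sqrt{\tfrac75}\,(\sqrt{15}-1)\le\frac{g_{\rho^2\sigma^2}}{g_{\rho^2}g_{\sigma^2}}\le\sqrt{\tfrac75}\,(\sqrt{15}+1).$$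
   Context: These are the $SU(2)$-invariants of a pair of real multiplets $\eta^{(2)}(\zeta)=\frac{\bar z_1}{\zeta}+x_1-z_1\zeta$ and $\eta^{(4)}(\zeta)=\frac{\bar z_2}{\zeta^2}+\frac{\bar v_2}{\zeta}+x_2-v_2\zeta+z_2\zeta^2$. *)

theory Defs
  imports Complex_Main
begin

definition g_sigma2 :: "real \<Rightarrow> complex \<Rightarrow> real" where
  "g_sigma2 x1 z1 = 4 * (cmod z1)^2 + x1^2"

definition g_rho2 :: "real \<Rightarrow> complex \<Rightarrow> complex \<Rightarrow> real" where
  "g_rho2 x2 z2 v2 = 4 * (cmod z2)^2 + (cmod v2)^2 + x2^2 / 3"

text \<open>The following two invariants are written as complex expressions exactly as in
the paper; they are sums of conjugate pairs, hence real, and we use their real part.\<close>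

definition g_rho_sigma2 :: "real \<Rightarrow> complex \<Rightarrow> real \<Rightarrow> complex \<Rightarrow> complex \<Rightarrow> complex" where
  "g_rho_sigma2 x1 z1 x2 z2 v2 =
     (2/3) * of_real x2 * (of_real (x1^2) - 2 * of_real ((cmod z1)^2))
     + 4 * z2 * (cnj z1)^2 + 4 * cnj z2 * z1^2
     + 2 * v2 * cnj z1 * of_real x1 + 2 * cnj v2 * z1 * of_real x1"

definition g_rho2_sigma2 :: "real \<Rightarrow> complex \<Rightarrow> real \<Rightarrow> complex \<Rightarrow> complex \<Rightarrow> complex" where
  "g_rho2_sigma2 x1 z1 x2 z2 v2 =
     (8 * of_real ((cmod z2)^2) - of_real ((cmod v2)^2) - (2/3) * of_real (x2^2))
       * (of_real (x1^2) - 2 * of_real ((cmod z1)^2))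
     - 12 * z2 * cnj v2 * cnj z1 * of_real x1
     - 12 * cnj z2 * v2 * z1 * of_real x1
     + 8 * z2 * of_real x2 * (cnj z1)^2
     + 8 * cnj z2 * of_real x2 * z1^2
     - 2 * v2 * of_real x2 * cnj z1 * of_real x1
     - 2 * cnj v2 * of_real x2 * z1 * of_real x1
     - 3 * v2^2 * (cnj z1)^2
     - 3 * (cnj v2)^2 * z1^2"

end

theory Submission
  imports Defs
begin

lemma cm: "cmod (Complex a b) * cmod (Complex a b) = a*a+b*b"
  using cmod_power2[of "Complex a b"] by (simp add: power2_eq_square)

lemma re1: "Re (g_rho_sigma2 x1 (Complex a b) x2 (Complex c d) (Complex e g)) =
  (2*a)*((2*c - x2/3)*(2*a) + (2*d)*(2*b) + e*x1) + (2*b)*((2*d)*(2*a) + (-2*c - x2/3)*(2*b) + g*x1)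
  + x1*(e*(2*a) + g*(2*b) + (2*x2/3)*x1)"
  by (simp add: g_rho_sigma2_def cm power2_eq_square algebra_simps)

lemma re2: "Re (g_rho2_sigma2 x1 (Complex a b) x2 (Complex c d) (Complex e g)) =
  2*(4*(a^2+b^2)+x1^2)*(4*(c^2+d^2)+(e^2+g^2)+x2^2/3) - 3*(((2*c - x2/3)*(2*a) + (2*d)*(2*b) + e*x1)^2 + ((2*d)*(2*a) + (-2*c - x2/3)*(2*b) + g*x1)^2 + (e*(2*a) + g*(2*b) + (2*x2/3)*x1)^2)"
  by (simp add: g_rho2_sigma2_def cm power2_eq_square algebra_simps)

lemma idK: "(3::real)*(((2*c - x2/3)*(2*a) + (2*d)*(2*b) + e*x1)^2 + ((2*d)*(2*a) + (-2*c - x2/3)*(2*b) + g*x1)^2 + (e*(2*a) + g*(2*b) + (2*x2/3)*x1)^2) =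
  4*(4*(a^2+b^2)+x1^2)*(4*(c^2+d^2)+(e^2+g^2)+x2^2/3) - (((2*c - x2/3)*0 - 0*(2*c - x2/3) + (2*d)*x1 - (-x1)*(2*d) + e*(-2*b) - (2*b)*e)^2 + ((2*c - x2/3)*(-x1) - 0*(2*d) + (2*d)*0 - (-x1)*(-2*c - x2/3) + e*(2*a) - (2*b)*g)^2 + ((2*c - x2/3)*(2*b) - 0*e + (2*d)*(-2*a) - (-x1)*g + e*0 - (2*b)*(2*x2/3))^2 + ((2*d)*0 - x1*(2*c - x2/3) + (-2*c - x2/3)*x1 - 0*(2*d) + g*(-2*b) - (-2*a)*e)^2 + ((2*d)*(-x1) - x1*(2*d) + (-2*c - x2/3)*0 - 0*(-2*c - x2/3) + g*(2*a) - (-2*a)*g)^2 + ((2*d)*(2*b) - x1*e + (-2*c - x2/3)*(-2*a) - 0*g + g*0 - (-2*a)*(2*x2/3))^2 + (e*0 - (-2*b)*(2*c - x2/3) + g*x1 - (2*a)*(2*d) + (2*x2/3)*(-2*b) - 0*e)^2 + (e*(-x1) - (-2*b)*(2*d) + g*0 - (2*a)*(-2*c - x2/3) + (2*x2/3)*(2*a) - 0*g)^2 + (e*(2*b) - (-2*b)*e + g*(-2*a) - (2*a)*g + (2*x2/3)*0 - 0*(2*x2/3))^2)/2"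
  unfolding power2_eq_square by (simp add: field_simps)

lemma cs3: "(p1*q1+p2*q2+p3*q3)^2 \<le> (p1^2+p2^2+p3^2)*(q1^2+q2^2+(q3::real)^2)"
proof -
  have "(p1^2+p2^2+p3^2)*(q1^2+q2^2+q3^2) - (p1*q1+p2*q2+p3*q3)^2
     = (p1*q2-p2*q1)^2 + (p1*q3-p3*q1)^2 + (p2*q3-p3*q2)^2"
    by (simp add: power2_eq_square algebra_simps)
  moreover have "(p1*q2-p2*q1)^2 + (p1*q3-p3*q1)^2 + (p2*q3-p3*q2)^2 \<ge> 0" by simp
  ultimately show ?thesis by linarith
qed

lemma final:
  fixes gs gr G1 G2 Q K :: real
  assumes gs: "gs > 0" and gr: "gr > 0" and c1: "G1^2 \<le> gs*Q" and k: "3*Q = 4*gs*gr - K/2"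
    and K: "K \<ge> 0" and Q: "Q \<ge> 0" and g2: "G2 = 2*gs*gr - 3*Q"
  shows "(- sqrt 2 \<le> G1 / (sqrt gr * gs) \<and> G1 / (sqrt gr * gs) \<le> sqrt 2)
     \<and> (- sqrt (7/5) * (sqrt 15 - 1) \<le> G2 / (gr * gs) \<and> G2 / (gr * gs) \<le> sqrt (7/5) * (sqrt 15 + 1))"
proof -
  have Qb: "Q \<le> 4/3*gs*gr" using k K by linarith
  have "G1^2 \<le> gs*(4/3*gs*gr)" using c1 Qb gs by (meson mult_left_mono less_imp_le order_trans)
  moreover have "gs*(4/3*gs*gr) = 4/3*(gr*gs^2)" by (simp add: power2_eq_square)
  moreover have "gr*gs^2 \<ge> 0" using gr by simp
  ultimately have h1: "G1^2 \<le> 2*(gr*gs^2)" by linarith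
  have sg: "sqrt gr * gs > 0" using gs gr by simp
  have "(G1 / (sqrt gr * gs))^2 = G1^2 / (gr*gs^2)" using gr by (simp add: power_divide power_mult_distrib)
  also have "\<dots> \<le> 2" using h1 gs gr by (simp add: divide_le_eq)
  finally have "\<bar>G1 / (sqrt gr * gs)\<bar> \<le> sqrt 2" using real_sqrt_le_mono real_sqrt_abs by metis
  hence A: "- sqrt 2 \<le> G1 / (sqrt gr * gs) \<and> G1 / (sqrt gr * gs) \<le> sqrt 2" by linarith
  have s1: "sqrt (7/5) \<ge> 1" by simp
  have "sqrt 15 \<ge> sqrt 9" by (rule real_sqrt_le_mono) simp
  hence s2: "sqrt 15 \<ge> 3" by simp
  have p: "gr*gs > 0" using gs gr by simp
  have u: "G2 \<le> 2*(gr*gs)" using g2 Q by (simp add: mult_ac)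
  have l: "G2 \<ge> -2*(gr*gs)" using g2 k K by (simp add: algebra_simps)
  have "G2/(gr*gs) \<le> 2" using u p by (simp add: divide_le_eq)
  moreover have "G2/(gr*gs) \<ge> -2" using l p by (simp add: le_divide_eq)
  moreover have "sqrt (7/5) * (sqrt 15 + 1) \<ge> 1*4" using s1 s2 by (intro mult_mono) auto
  moreover have "sqrt (7/5) * (sqrt 15 - 1) \<ge> 1*2" using s1 s2 by (intro mult_mono) auto
  ultimately show ?thesis using A by linarith
qed

theorem mainTheorem2:
  fixes x1 x2 :: real and z1 z2 v2 :: complex
  shows "g_sigma2 x1 z1 \<ge> 0 \<and> g_rho2 x2 z2 v2 \<ge> 0 \<and>
    (g_sigma2 x1 z1 * g_rho2 x2 z2 v2 \<noteq> 0 \<longrightarrow>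
      (- sqrt 2 \<le> Re (g_rho_sigma2 x1 z1 x2 z2 v2) / (sqrt (g_rho2 x2 z2 v2) * g_sigma2 x1 z1)
       \<and> Re (g_rho_sigma2 x1 z1 x2 z2 v2) / (sqrt (g_rho2 x2 z2 v2) * g_sigma2 x1 z1) \<le> sqrt 2)
     \<and> (- sqrt (7/5) * (sqrt 15 - 1) \<le> Re (g_rho2_sigma2 x1 z1 x2 z2 v2) / (g_rho2 x2 z2 v2 * g_sigma2 x1 z1)
       \<and> Re (g_rho2_sigma2 x1 z1 x2 z2 v2) / (g_rho2 x2 z2 v2 * g_sigma2 x1 z1) \<le> sqrt (7/5) * (sqrt 15 + 1)))"
proof -
  obtain a b where z1: "z1 = Complex a b" by (cases z1)
  obtain c d where z2: "z2 = Complex c d" by (cases z2)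
  obtain e g where v2: "v2 = Complex e g" by (cases v2)
  have hs: "g_sigma2 x1 z1 = 4*(a^2+b^2)+x1^2" by (simp add: g_sigma2_def z1 cmod_power2)
  have hr: "g_rho2 x2 z2 v2 = 4*(c^2+d^2)+(e^2+g^2)+x2^2/3" by (simp add: g_rho2_def z2 v2 cmod_power2)
  have nn1: "g_sigma2 x1 z1 \<ge> 0" unfolding hs by simp
  have nn2: "g_rho2 x2 z2 v2 \<ge> 0" unfolding hr by simp
  have c1: "(Re (g_rho_sigma2 x1 z1 x2 z2 v2))^2 \<le> g_sigma2 x1 z1 * (((2*c - x2/3)*(2*a) + (2*d)*(2*b) + e*x1)^2 + ((2*d)*(2*a) + (-2*c - x2/3)*(2*b) + g*x1)^2 + (e*(2*a) + g*(2*b) + (2*x2/3)*x1)^2)"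
  proof -
    have "g_sigma2 x1 z1 = (2*a)^2 + (2*b)^2 + x1^2" unfolding hs by (simp add: power2_eq_square)
    thus ?thesis unfolding z1 z2 v2 re1 using cs3 by (metis z1)
  qed
  show ?thesis
  proof (intro conjI impI nn1 nn2)
    assume "g_sigma2 x1 z1 * g_rho2 x2 z2 v2 \<noteq> 0"
    hence gs: "g_sigma2 x1 z1 > 0" and gr: "g_rho2 x2 z2 v2 > 0" using nn1 nn2 by auto
    have "(- sqrt 2 \<le> Re (g_rho_sigma2 x1 z1 x2 z2 v2) / (sqrt (g_rho2 x2 z2 v2) * g_sigma2 x1 z1)
       \<and> Re (g_rho_sigma2 x1 z1 x2 z2 v2) / (sqrt (g_rho2 x2 z2 v2) * g_sigma2 x1 z1) \<le> sqrt 2)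
     \<and> (- sqrt (7/5) * (sqrt 15 - 1) \<le> Re (g_rho2_sigma2 x1 z1 x2 z2 v2) / (g_rho2 x2 z2 v2 * g_sigma2 x1 z1)
       \<and> Re (g_rho2_sigma2 x1 z1 x2 z2 v2) / (g_rho2 x2 z2 v2 * g_sigma2 x1 z1) \<le> sqrt (7/5) * (sqrt 15 + 1))"
    proof (rule final[OF gs gr c1])
      show "3*(((2*c - x2/3)*(2*a) + (2*d)*(2*b) + e*x1)^2 + ((2*d)*(2*a) + (-2*c - x2/3)*(2*b) + g*x1)^2 + (e*(2*a) + g*(2*b) + (2*x2/3)*x1)^2) = 4 * g_sigma2 x1 z1 * g_rho2 x2 z2 v2 - (((2*c - x2/3)*0 - 0*(2*c - x2/3) + (2*d)*x1 - (-x1)*(2*d) + e*(-2*b) - (2*b)*e)^2 + ((2*c - x2/3)*(-x1) - 0*(2*d) + (2*d)*0 - (-x1)*(-2*c - x2/3) + e*(2*a) - (2*b)*g)^2 + ((2*c - x2/3)*(2*b) - 0*e + (2*d)*(-2*a) - (-x1)*g + e*0 - (2*b)*(2*x2/3))^2 + ((2*d)*0 - x1*(2*c - x2/3) + (-2*c - x2/3)*x1 - 0*(2*d) + g*(-2*b) - (-2*a)*e)^2 + ((2*d)*(-x1) - x1*(2*d) + (-2*c - x2/3)*0 - 0*(-2*c - x2/3) + g*(2*a) - (-2*a)*g)^2 + ((2*d)*(2*b) - x1*e + (-2*c - x2/3)*(-2*a) - 0*g + g*0 - (-2*a)*(2*x2/3))^2 + (e*0 - (-2*b)*(2*c - x2/3)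 + g*x1 - (2*a)*(2*d) + (2*x2/3)*(-2*b) - 0*e)^2 + (e*(-x1) - (-2*b)*(2*d) + g*0 - (2*a)*(-2*c - x2/3) + (2*x2/3)*(2*a) - 0*g)^2 + (e*(2*b) - (-2*b)*e + g*(-2*a) - (2*a)*g + (2*x2/3)*0 - 0*(2*x2/3))^2)/2"
        unfolding hs hr by (rule idK)
      show "Re (g_rho2_sigma2 x1 z1 x2 z2 v2) = 2 * g_sigma2 x1 z1 * g_rho2 x2 z2 v2 - 3*(((2*c - x2/3)*(2*a) + (2*d)*(2*b) + e*x1)^2 + ((2*d)*(2*a) + (-2*c - x2/3)*(2*b) + g*x1)^2 + (e*(2*a) + g*(2*b) + (2*x2/3)*x1)^2)"
        using re2[of x1 a b x2 c d e g] hs hr z1 z2 v2 by simp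
    qed simp_all
    thus "- sqrt 2 \<le> Re (g_rho_sigma2 x1 z1 x2 z2 v2) / (sqrt (g_rho2 x2 z2 v2) * g_sigma2 x1 z1)"
      "Re (g_rho_sigma2 x1 z1 x2 z2 v2) / (sqrt (g_rho2 x2 z2 v2) * g_sigma2 x1 z1) \<le> sqrt 2"
      "- sqrt (7/5) * (sqrt 15 - 1) \<le> Re (g_rho2_sigma2 x1 z1 x2 z2 v2) / (g_rho2 x2 z2 v2 * g_sigma2 x1 z1)"
      "Re (g_rho2_sigma2 x1 z1 x2 z2 v2) / (g_rho2 x2 z2 v2 * g_sigma2 x1 z1) \<le> sqrt (7/5) * (sqrt 15 + 1)"
      by auto
  qed
qed

end
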